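(* Let $X$ be a Banach space, $\Omega\in L(X)$ an isomorphism of $X$ onto itself, $\tau>0$ and $\varphi\in C^{2}([-2\tau,0],X)$. Then the unique classical solution of $$\ddot x(t)-\Omega^{2}x(t-2\tau)=0\ (t\ge0),\qquad x(t)=\varphi(t)\ (t\in[-2\tau,0])$$ is given for $t\in[-2\tau,\infty)$ by $$x(t)=x_1(t+\tau;\Omega)\varphi(-2\tau)+x_2(t+2\tau;\Omega)\dot\varphi(-2\tau)+\int_{-2\tau}^{0}x_2(t-s;\Omega)\ddot\varphi(s)\,ds.$$
   Context: For $A\in L(X)$, $\exp_\tau(t;A)=0$ for $t<-\tau$, $=\mathrm{id}_X$ for $-\tau\le t<0$, and $=\sum_{j=0}^{k}A^{j}\frac{(t-(j-1)\tau)^{j}}{j!}$ for $(k-1)\tau\le t<k\tau$, $k\in\mathbb N$. For $t\in\mathbb R$, $x_1(t;\Omega):=\tfrac12(\exp_\tau(t;\Omega)+\exp_\tau(t;-\Omega))$ and $x_2(t;\Omega):=\tfrac12\Omega^{-1}(\exp_\tau(t;\Omega)-\exp_\tau(t;-\Omega))$; in particular $x_2(t;\Omega)=0$ for all $t<0$ and $x_1(t;\Omega)=0$ for $t<-\tau$. A classical solution of $\ddot x(t)-\Omega^2x(t-2\tau)=f(t)$ ($t\ge0$), $x=\varphi$ on $[-2\tau,0]$, is a function $x\in C^{1}([-2\tau,\infty),X)\cap C^{2}([-2\tau,0],X)\cap C^{2}([0,\infty),X)$ (one-sided derivatives at endpoints) satisfying these equations pointwise. *)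

theory Defs
  imports "HOL-Analysis.Analysis"
begin

definition blinfun_pow :: "('a::real_normed_vector \<Rightarrow>\<^sub>L 'a) \<Rightarrow> nat \<Rightarrow> ('a \<Rightarrow>\<^sub>L 'a)" where
  "blinfun_pow A j = ((\<lambda>B. A o\<^sub>L B) ^^ j) id_blinfun"

text \<open>Delayed exponential exp_tau(t;A). For t >= 0 the index k with (k-1)tau <= t < k tau
  is k = floor(t/tau) + 1.\<close>
definition exp_tau :: "real \<Rightarrow> ('a::real_normed_vector \<Rightarrow>\<^sub>L 'a) \<Rightarrow> real \<Rightarrow> ('a \<Rightarrow>\<^sub>L 'a)" where
  "exp_tau \<tau> A t =
     (if t < - \<tau> then 0
      else if t < 0 then id_blinfun
      else (\<Sum>j = 0..nat (\<lfloor>t / \<tau>\<rfloor> + 1).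
              ((t - (real j - 1) * \<tau>) ^ j / fact j) *\<^sub>R blinfun_pow A j))"

text \<open>Inverse of an isomorphism Omega in L(X) (bounded by the open mapping theorem).\<close>
definition inv_blinfun :: "('a::real_normed_vector \<Rightarrow>\<^sub>L 'a) \<Rightarrow> ('a \<Rightarrow>\<^sub>L 'a)" where
  "inv_blinfun \<Omega> = Blinfun (inv (blinfun_apply \<Omega>))"

definition x1 :: "real \<Rightarrow> ('a::real_normed_vector \<Rightarrow>\<^sub>L 'a) \<Rightarrow> real \<Rightarrow> ('a \<Rightarrow>\<^sub>L 'a)" where
  "x1 \<tau> \<Omega> t = (1/2) *\<^sub>R (exp_tau \<tau> \<Omega> t + exp_tau \<tau> (- \<Omega>) t)"

definition x2 :: "real \<Rightarrow> ('a::real_normed_vector \<Rightarrow>\<^sub>L 'a) \<Rightarrow> real \<Rightarrow> ('a \<Rightarrow>\<^sub>L 'a)" where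
  "x2 \<tau> \<Omega> t = (1/2) *\<^sub>R (inv_blinfun \<Omega> o\<^sub>L (exp_tau \<tau> \<Omega> t - exp_tau \<tau> (- \<Omega>) t))"

definition C2_with :: "real \<Rightarrow> real \<Rightarrow> (real \<Rightarrow> 'a::real_normed_vector) \<Rightarrow> (real \<Rightarrow> 'a) \<Rightarrow> (real \<Rightarrow> 'a) \<Rightarrow> bool" where
  "C2_with a b f f' f'' \<longleftrightarrow>
     (\<forall>t\<in>{a..b}. (f has_vector_derivative f' t) (at t within {a..b})) \<and>
     (\<forall>t\<in>{a..b}. (f' has_vector_derivative f'' t) (at t within {a..b})) \<and>
     continuous_on {a..b} f''"

definition classical_solution ::
  "('a::real_normed_vector \<Rightarrow>\<^sub>L 'a) \<Rightarrow> real \<Rightarrow> (real \<Rightarrow> 'a) \<Rightarrow> (real \<Rightarrow> 'a) \<Rightarrow> (real \<Rightarrow> 'a) \<Rightarrow> bool" where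
  "classical_solution \<Omega> \<tau> f \<phi> x \<longleftrightarrow>
     (\<exists>x' xl'' xr''.
        (\<forall>t\<in>{-2*\<tau>..}. (x has_vector_derivative x' t) (at t within {-2*\<tau>..})) \<and>
        continuous_on {-2*\<tau>..} x' \<and>
        (\<forall>t\<in>{-2*\<tau>..0}. (x' has_vector_derivative xl'' t) (at t within {-2*\<tau>..0})) \<and>
        continuous_on {-2*\<tau>..0} xl'' \<and>
        (\<forall>t\<in>{0..}. (x' has_vector_derivative xr'' t) (at t within {0..})) \<and>
        continuous_on {0..} xr'' \<and>
        (\<forall>t\<in>{0..}. xr'' t - blinfun_pow \<Omega> 2 (x (t - 2*\<tau>)) = f t) \<and>
        (\<forall>t\<in>{-2*\<tau>..0}. x t = \<phi> t))"

end

theory Submission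
  imports Defs
begin


lemma hvd_within_Un:
  assumes "(f has_vector_derivative f') (at x within S)" "(f has_vector_derivative f') (at x within T)"
  shows "(f has_vector_derivative f') (at x within S \<union> T)"
  using assms unfolding has_vector_derivative_def has_derivative_within
  by (simp add: Lim_within_Un)

lemma glue_deriv:
  fixes f :: "real \<Rightarrow> 'a::real_normed_vector"
  assumes ab: "a \<le> b"
    and L: "\<And>u. u \<in> {a..b} \<Longrightarrow> (f has_vector_derivative f' u) (at u within {a..b})"
    and R: "\<And>u. u \<in> {b..} \<Longrightarrow> (f has_vector_derivative f' u) (at u within {b..})"
    and u: "u \<in> {a..}"
  shows "(f has_vector_derivative f' u) (at u within {a..})"
proof -
  consider "u < b" | "u = b" | "u > b" by linarith
  then show ?thesis
  proof cases
    case 1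
    have "at u within {a..} = at u within {a..b}"
      by (rule at_within_nhd[of _ "{..<b}"]) (use 1 in auto)
    then show ?thesis using L[of u] 1 u by auto
  next
    case 2
    have "{a..} = {a..b} \<union> {b..}" using ab by auto
    then show ?thesis using L[of u] R[of u] 2 ab by (auto intro: hvd_within_Un)
  next
    case 3
    have "at u within {a..} = at u within {b..}"
      by (rule at_within_nhd[of _ "{b<..}"]) (use 3 ab in auto)
    then show ?thesis using R[of u] 3 by auto
  qed
qed

lemma blinfun_pow_0[simp]: "blinfun_pow A 0 = id_blinfun"
  by (simp add: blinfun_pow_def)
lemma blinfun_pow_Suc: "blinfun_pow A (Suc n) = A o\<^sub>L blinfun_pow A n"
  by (simp add: blinfun_pow_def)
lemma blinfun_pow_2: "blinfun_pow A 2 = A o\<^sub>L A"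
  by (rule blinfun_eqI) (simp add: numeral_2_eq_2 blinfun_pow_Suc)
lemma blinfun_pow_neg: "blinfun_pow (- A) n = ((-1::real)^n) *\<^sub>R blinfun_pow A n"
  by (induction n) (auto simp: blinfun_pow_Suc intro!: blinfun_eqI simp: blinfun.scaleR_right scaleR_blinfun.rep_eq uminus_blinfun.rep_eq)

primrec rseq :: "('a::real_normed_vector \<Rightarrow> 'a) \<Rightarrow> ('a \<Rightarrow> nat \<Rightarrow> 'a) \<Rightarrow> 'a \<Rightarrow> nat \<Rightarrow> 'a" where
  "rseq T p y 0 = y"
| "rseq T p y (Suc k) = rseq T p y k - T (p (rseq T p y k) k)"

lemma approx_inverse:
  fixes T :: "'a::banach \<Rightarrow>\<^sub>L 'a"
  assumes bij: "bij (blinfun_apply T)"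
  shows "\<exists>M\<ge>0. \<forall>y e. e > 0 \<longrightarrow> (\<exists>x. norm x \<le> M * norm y \<and> norm (T x - y) < e)"
proof -
  define K where "K n = closure (blinfun_apply T ` cball 0 (real n))" for n
  have cover: "\<Union>(range K) = UNIV"
  proof -
    { fix y
      obtain x where x: "y = T x" using bij by (metis bij_pointE)
      have "x \<in> cball 0 (real (nat \<lceil>norm x\<rceil>))"
        by simp
      then have "T x \<in> blinfun_apply T ` cball 0 (real (nat \<lceil>norm x\<rceil>))" by (rule imageI)
      then have "y \<in> K (nat \<lceil>norm x\<rceil>)" unfolding K_def x by (rule subsetD[OF closure_subset])
      then have "y \<in> \<Union>(range K)" by blast }
    then show ?thesis by blast
  qed
  have "\<exists>n. interior (K n) \<noteq> {}"
  proof (rule ccontr)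
    assume "\<not> ?thesis"
    then have "Met_TC.mtopology interior_of \<Union>(range K) = {}"
      by (intro Met_TC.metric_Baire_category_alt) (auto simp: K_def complete_UNIV)
    then show False using cover by simp
  qed
  then obtain n y0 where "y0 \<in> interior (K n)" by blast
  then obtain r where r: "r > 0" "ball y0 r \<subseteq> K n"
    by (meson mem_interior)
  have A1: "\<exists>x. norm x \<le> 2 * real n \<and> norm (T x - z) < e" if z: "norm z < r" and e: "e > 0" for z e
  proof -
    have "y0 + z \<in> ball y0 r" using z by (simp add: dist_norm)
    then have "y0 + z \<in> K n" using r(2) by blast
    then obtain x1 where x1: "x1 \<in> cball 0 (real n)" "dist (T x1) (y0 + z) < e/2"
      using e unfolding K_def closure_approachable by (metis (no_types, lifting) half_gt_zero imageE)
    have "y0 \<in> ball y0 r" using r(1) by simp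
    then have "y0 \<in> K n" using r(2) by blast
    then obtain x2 where x2: "x2 \<in> cball 0 (real n)" "dist (T x2) y0 < e/2"
      using e unfolding K_def closure_approachable by (metis (no_types, lifting) half_gt_zero imageE)
    have "norm (x1 - x2) \<le> norm x1 + norm x2" by (rule norm_triangle_ineq4)
    also have "\<dots> \<le> 2 * real n" using x1 x2 by simp
    finally have 1: "norm (x1 - x2) \<le> 2 * real n" .
    have "T (x1 - x2) - z = (T x1 - (y0 + z)) - (T x2 - y0)"
      by (simp add: blinfun.diff_right)
    then have "norm (T (x1 - x2) - z) \<le> norm (T x1 - (y0 + z)) + norm (T x2 - y0)"
      by (metis norm_triangle_ineq4)
    also have "\<dots> < e" using x1 x2 by (simp add: dist_norm)
    finally show ?thesis using 1 by blast
  qed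
  define M where "M = 4 * real n / r"
  have "M \<ge> 0" using r by (simp add: M_def)
  moreover have "\<exists>x. norm x \<le> M * norm y \<and> norm (T x - y) < e" if e: "e > 0" for y e
  proof (cases "y = 0")
    case True then show ?thesis using e by (intro exI[of _ 0]) simp
  next
    case False
    define l where "l = r / (2 * norm y)"
    have l: "l > 0" using False r by (simp add: l_def)
    have "norm (l *\<^sub>R y) = r / 2" using False r by (simp add: l_def)
    then have "norm (l *\<^sub>R y) < r" using r by simp
    then obtain x' where x': "norm x' \<le> 2 * real n" "norm (T x' - l *\<^sub>R y) < e * l"
      using A1[of "l *\<^sub>R y" "e * l"] e l by (meson mult_pos_pos)
    have "norm ((1/l) *\<^sub>R x') = norm x' / l" using l by simp
    also have "\<dots> \<le> 2 * real n / l" using x' l by (simp add: divide_right_mono)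
    also have "\<dots> = M * norm y" using False r by (simp add: l_def M_def field_simps)
    finally have 1: "norm ((1/l) *\<^sub>R x') \<le> M * norm y" .
    have "T ((1/l) *\<^sub>R x') - y = (1/l) *\<^sub>R (T x' - l *\<^sub>R y)"
      using l by (simp add: blinfun.scaleR_right algebra_simps)
    then have "norm (T ((1/l) *\<^sub>R x') - y) = norm (T x' - l *\<^sub>R y) / l"
      using l by simp
    also have "\<dots> < e" using x' l by (simp add: divide_less_eq)
    finally show ?thesis using 1 by blast
  qed
  ultimately show ?thesis by blast
qed

lemma exact_inverse:
  fixes T :: "'a::banach \<Rightarrow>\<^sub>L 'a"
  assumes bij: "bij (blinfun_apply T)"
  obtains M where "M \<ge> 0" "\<And>y. \<exists>x. T x = y \<and> norm x \<le> 2 * M * norm y"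
proof -
  obtain M where M: "M \<ge> 0" "\<And>y e. e > 0 \<Longrightarrow> \<exists>x. norm x \<le> M * norm y \<and> norm (T x - y) < e"
    using approx_inverse[OF bij] by blast
  have "\<exists>x. T x = y \<and> norm x \<le> 2 * M * norm y" for y
  proof (cases "y = 0")
    case True then show ?thesis by (intro exI[of _ 0]) simp
  next
    case False
    have H: "\<forall>z. \<forall>k. \<exists>x. norm x \<le> M * norm z \<and> norm (T x - z) < norm y / 2 ^ Suc k"
      using M(2) False by simp
    have "\<exists>p. \<forall>z. \<forall>k. norm (p z k) \<le> M * norm z \<and> norm (T (p z k) - z) < norm y / 2 ^ Suc k"
      apply (rule choice) apply (rule allI) apply (rule choice) using H by blast
    then obtain p where p: "\<And>z k. norm (p z k) \<le> M * norm z \<and> norm (T (p z k) - z) < norm y / 2 ^ Suc k"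
      by blast
    define ys where "ys = rseq (blinfun_apply T) p y"
    define xs where "xs k = p (ys k) k" for k
    have ys_bound: "norm (ys k) \<le> norm y / 2 ^ k" for k
    proof (cases k)
      case 0 then show ?thesis by (simp add: ys_def)
    next
      case (Suc j)
      have "ys (Suc j) = - (T (p (ys j) j) - ys j)" by (simp add: ys_def)
      then have "norm (ys (Suc j)) = norm (T (p (ys j) j) - ys j)" by (metis norm_minus_cancel)
      then show ?thesis using p[of "ys j" j] Suc by simp
    qed
    have xs_bound: "norm (xs k) \<le> M * norm y * (1/2) ^ k" for k
    proof -
      have "norm (xs k) \<le> M * norm (ys k)" using p by (simp add: xs_def)
      also have "\<dots> \<le> M * (norm y / 2 ^ k)" using mult_left_mono[OF ys_bound[of k] M(1)] by simp
      finally show ?thesis by (simp add: power_one_over)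
    qed
    have sg: "summable (\<lambda>k. M * norm y * (1/2::real) ^ k)"
      by (intro summable_mult summable_geometric) simp
    have sn: "summable (\<lambda>k. norm (xs k))"
      by (rule summable_comparison_test[OF _ sg]) (use xs_bound in auto)
    then have sx: "summable xs" by (rule summable_norm_cancel)
    define s where "s = suminf xs"
    have "norm s \<le> (\<Sum>k. norm (xs k))" unfolding s_def by (rule summable_norm[OF sn])
    also have "\<dots> \<le> (\<Sum>k. M * norm y * (1/2::real) ^ k)"
      by (rule suminf_le[OF _ sn sg]) (use xs_bound in auto)
    also have "\<dots> = 2 * M * norm y"
      by (simp add: suminf_mult suminf_geometric)
    finally have ns: "norm s \<le> 2 * M * norm y" .
    have part: "(\<Sum>k<n. T (xs k)) = y - ys n" for n
      by (induction n) (simp_all add: ys_def xs_def)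
    have "(\<lambda>n. ys n) \<longlonglongrightarrow> 0"
    proof (rule Lim_null_comparison)
      show "\<forall>\<^sub>F n in sequentially. norm (ys n) \<le> norm y * (1/2) ^ n"
        using ys_bound by (simp add: power_one_over)
      show "(\<lambda>n. norm y * (1/2::real) ^ n) \<longlonglongrightarrow> 0"
        by (intro tendsto_mult_right_zero LIMSEQ_power_zero) simp
    qed
    then have "(\<lambda>n. y - ys n) \<longlonglongrightarrow> y - 0" by (intro tendsto_diff tendsto_const)
    then have "(\<lambda>k. T (xs k)) sums y" unfolding sums_def part by simp
    moreover have "(\<lambda>k. T (xs k)) sums T s"
      unfolding s_def by (intro bounded_linear.sums[OF blinfun.bounded_linear_right] summable_sums sx)
    ultimately have "T s = y" using sums_unique2 by blast
    then show ?thesis using ns by blast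
  qed
  then show ?thesis using M(1) that by blast
qed

lemma bounded_linear_inv:
  fixes T :: "'a::banach \<Rightarrow>\<^sub>L 'a"
  assumes bij: "bij (blinfun_apply T)"
  shows "bounded_linear (inv (blinfun_apply T))"
proof -
  obtain M where M: "M \<ge> 0" "\<And>y. \<exists>x. T x = y \<and> norm x \<le> 2 * M * norm y"
    using exact_inverse[OF bij] by blast
  have inj: "inj (blinfun_apply T)" and surj: "surj (blinfun_apply T)" using bij bij_is_inj bij_is_surj by auto
  let ?S = "inv (blinfun_apply T)"
  have TS: "T (?S y) = y" for y using surj by (simp add: surj_f_inv_f)
  have ST: "?S (T x) = x" for x using inj by (simp add: inv_f_f)
  show ?thesis
  proof (rule bounded_linear_intro)
    fix a b
    have "?S (a + b) = ?S (T (?S a) + T (?S b))" by (simp add: TS)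
    also have "\<dots> = ?S (T (?S a + ?S b))" by (simp add: blinfun.add_right)
    also have "\<dots> = ?S a + ?S b" by (rule ST)
    finally show "?S (a + b) = ?S a + ?S b" .
  next
    fix r a
    have "?S (r *\<^sub>R a) = ?S (r *\<^sub>R T (?S a))" by (simp add: TS)
    also have "\<dots> = ?S (T (r *\<^sub>R ?S a))" by (simp add: blinfun.scaleR_right)
    also have "\<dots> = r *\<^sub>R ?S a" by (rule ST)
    finally show "?S (r *\<^sub>R a) = r *\<^sub>R ?S a" .
  next
    fix y
    obtain x where x: "T x = y" "norm x \<le> 2 * M * norm y" using M(2) by blast
    have "?S y = x" using x(1) ST by blast
    then show "norm (?S y) \<le> norm y * (2 * M)" using x(2) by (simp add: mult.commute)
  qed
qed

lemma inv_blinfun_left: "bij (blinfun_apply \<Omega>) \<Longrightarrow> inv_blinfun \<Omega> o\<^sub>L \<Omega> = (id_blinfun :: 'a::banach \<Rightarrow>\<^sub>L 'a)"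
  unfolding inv_blinfun_def
  by (rule blinfun_eqI) (simp add: bounded_linear_Blinfun_apply[OF bounded_linear_inv] bij_is_inj inv_f_f)

lemma inv_blinfun_right: "bij (blinfun_apply \<Omega>) \<Longrightarrow> \<Omega> o\<^sub>L inv_blinfun \<Omega> = (id_blinfun :: 'a::banach \<Rightarrow>\<^sub>L 'a)"
  unfolding inv_blinfun_def
  by (rule blinfun_eqI) (simp add: bounded_linear_Blinfun_apply[OF bounded_linear_inv] bij_is_surj surj_f_inv_f)




definition pp :: "real \<Rightarrow> real" where "pp x = max x 0"
definition gg :: "real \<Rightarrow> nat \<Rightarrow> real \<Rightarrow> real" where
  "gg \<tau> j t = pp (t - (real j - 1) * \<tau>) ^ j / fact j"

lemma gg_0[simp]: "gg \<tau> 0 t = 1" by (simp add: gg_def)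

lemma exp_tau_rep:
  assumes tau: "\<tau> > 0" and t: "t \<ge> - \<tau>" and N: "real N \<ge> t / \<tau> + 1"
  shows "exp_tau \<tau> A t = (\<Sum>j = 0..N. gg \<tau> j t *\<^sub>R blinfun_pow A j)"
proof (cases "t < 0")
  case True
  have "(\<Sum>j = 0..N. gg \<tau> j t *\<^sub>R blinfun_pow A j) = (\<Sum>j \<in> {0}. gg \<tau> j t *\<^sub>R blinfun_pow A j)"
  proof (rule sum.mono_neutral_right)
    show "\<forall>i\<in>{0..N} - {0}. gg \<tau> i t *\<^sub>R blinfun_pow A i = 0"
    proof
      fix i assume i: "i \<in> {0..N} - {0}"
      then have "t - (real i - 1) * \<tau> < 0" using True tau
        by (smt (verit, best) DiffE mult_nonneg_nonneg of_nat_0_le_iff of_nat_1 of_nat_diff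
            singletonI atLeastAtMost_iff le_add_diff_inverse neq0_conv less_one linorder_not_le)
      then have "pp (t - (real i - 1) * \<tau>) = 0" by (simp add: pp_def)
      then show "gg \<tau> i t *\<^sub>R blinfun_pow A i = 0" using i by (simp add: gg_def)
    qed
  qed auto
  then show ?thesis using True t by (simp add: exp_tau_def)
next
  case False
  define m where "m = \<lfloor>t / \<tau>\<rfloor>"
  have m0: "m \<ge> 0" using False tau by (simp add: m_def)
  have m1: "real_of_int m * \<tau> \<le> t" using tau unfolding m_def
    by (metis floor_divide_lower)
  have m2: "t < (real_of_int m + 1) * \<tau>" using tau unfolding m_def
    by (metis floor_divide_upper)
  define k where "k = nat (m + 1)"
  have kreal: "real k = real_of_int m + 1" using m0 by (simp add: k_def)
  have kN: "k \<le> N"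
  proof -
    have "real_of_int m \<le> t / \<tau>" unfolding m_def by simp
    then show ?thesis using N kreal by linarith
  qed
  have "(\<Sum>j = 0..N. gg \<tau> j t *\<^sub>R blinfun_pow A j) = (\<Sum>j = 0..k. gg \<tau> j t *\<^sub>R blinfun_pow A j)"
  proof (rule sum.mono_neutral_right)
    show "\<forall>i\<in>{0..N} - {0..k}. gg \<tau> i t *\<^sub>R blinfun_pow A i = 0"
    proof
      fix i assume i: "i \<in> {0..N} - {0..k}"
      then have "real i \<ge> real k + 1" by auto
      then have "(real i - 1) * \<tau> \<ge> real k * \<tau>" using tau by (simp add: mult_right_mono)
      then have "t - (real i - 1) * \<tau> < 0" using m2 kreal by (simp add: algebra_simps)
      then have "pp (t - (real i - 1) * \<tau>) = 0" by (simp add: pp_def)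
      then show "gg \<tau> i t *\<^sub>R blinfun_pow A i = 0" using i by (simp add: gg_def)
    qed
  qed (use kN in auto)
  also have "\<dots> = (\<Sum>j = 0..k. ((t - (real j - 1) * \<tau>) ^ j / fact j) *\<^sub>R blinfun_pow A j)"
  proof (rule sum.cong)
    fix j assume j: "j \<in> {0..k}"
    then have "real j - 1 \<le> real_of_int m" using kreal by auto
    then have "(real j - 1) * \<tau> \<le> real_of_int m * \<tau>" using tau by (simp add: mult_right_mono)
    then have "pp (t - (real j - 1) * \<tau>) = t - (real j - 1) * \<tau>" using m1 by (simp add: pp_def)
    then show "gg \<tau> j t *\<^sub>R blinfun_pow A j = ((t - (real j - 1) * \<tau>) ^ j / fact j) *\<^sub>R blinfun_pow A j"
      by (simp add: gg_def)
  qed simp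
  finally show ?thesis using False t by (simp add: exp_tau_def k_def m_def)
qed

lemma pp_pow_deriv:
  assumes i: "i \<ge> 1"
  shows "((\<lambda>x. pp x ^ Suc i) has_real_derivative (real (Suc i) * pp x ^ i)) (at x)"
proof -
  consider "x > 0" | "x < 0" | "x = 0" by linarith
  then show ?thesis
  proof cases
    case 1
    have d: "((\<lambda>x. x ^ Suc i) has_real_derivative (real (Suc i) * x ^ i)) (at x)"
      by (rule derivative_eq_intros refl | simp)+
    have "pp x = x" using 1 by (simp add: pp_def)
    with d have "((\<lambda>x. x ^ Suc i) has_real_derivative (real (Suc i) * pp x ^ i)) (at x)" by simp
    then show ?thesis
      by (rule has_field_derivative_transform_within_open[of _ _ _ "{0<..}"])
         (use 1 in \<open>auto simp: pp_def\<close>)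
  next
    case 2
    have "((\<lambda>x. 0) has_real_derivative (real (Suc i) * pp x ^ i)) (at x)"
      using 2 i by (simp add: pp_def power_0_left)
    then show ?thesis
      by (rule has_field_derivative_transform_within_open[of _ _ _ "{..<0}"])
         (use 2 in \<open>auto simp: pp_def\<close>)
  next
    case 3
    have cont: "isCont (\<lambda>z. pp z ^ i) 0"
      unfolding pp_def by (intro continuous_intros)
    have eq: "pp z ^ Suc i - pp 0 ^ Suc i = pp z ^ i * (z - 0)" for z
      using i by (cases "z \<ge> 0") (auto simp: pp_def)
    have "((\<lambda>x. pp x ^ Suc i) has_real_derivative (pp 0 ^ i)) (at 0)"
      unfolding CARAT_DERIV by (intro exI[of _ "\<lambda>z. pp z ^ i"]) (use eq cont in auto)
    then show ?thesis using 3 i by (simp add: pp_def power_0_left)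
  qed
qed

lemma gg_deriv:
  assumes tau: "\<tau> > 0" and t: "t \<ge> 0" and j: "j \<ge> 1"
  shows "(gg \<tau> j has_real_derivative gg \<tau> (j - 1) (t - \<tau>)) (at t within {0..})"
proof -
  obtain i where ji: "j = Suc i" using j by (cases j) auto
  show ?thesis
  proof (cases "i = 0")
    case True
    have "((\<lambda>y. y) has_real_derivative 1) (at t within {0..})"
      by (rule DERIV_ident)
    moreover have "y = gg \<tau> j y" if "y \<in> {0..}" for y
      using that True by (simp add: gg_def ji pp_def)
    ultimately have "(gg \<tau> j has_real_derivative 1) (at t within {0..})"
      using t by (rule_tac has_field_derivative_transform_within[where d=1]) simp_all
    then show ?thesis using True by (simp add: ji)
  next
    case False
    then have i1: "i \<ge> 1" by simp
    have "((\<lambda>y. pp (y - real i * \<tau>) ^ Suc i) has_real_derivative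
            (real (Suc i) * pp (t - real i * \<tau>) ^ i) * 1) (at t)"
      by (rule DERIV_chain2[OF pp_pow_deriv[OF i1]]) (use DERIV_diff[OF DERIV_ident DERIV_const] in simp)
    then have d: "((\<lambda>y. pp (y - real i * \<tau>) ^ Suc i / fact (Suc i)) has_real_derivative
            (real (Suc i) * pp (t - real i * \<tau>) ^ i) * 1 / fact (Suc i)) (at t)"
      by (rule DERIV_cdivide)
    have v: "real (Suc i) * p ^ i * 1 / fact (Suc i) = p ^ i / fact i" for p :: real
      by (simp add: fact_Suc del: of_nat_Suc)
    have e1: "gg \<tau> j = (\<lambda>y. pp (y - real i * \<tau>) ^ Suc i / fact (Suc i))"
      by (simp add: gg_def ji fun_eq_iff)
    have a2: "t - \<tau> - (real i - 1) * \<tau> = t - real i * \<tau>" by (simp add: algebra_simps)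
    have e2: "gg \<tau> (j - 1) (t - \<tau>) = pp (t - real i * \<tau>) ^ i / fact i"
      by (simp add: gg_def ji a2)
    have "(gg \<tau> j has_real_derivative gg \<tau> (j - 1) (t - \<tau>)) (at t)"
      using d unfolding e1 e2 v .
    then show ?thesis by (rule has_field_derivative_at_within)
  qed
qed

lemma exp_tau_deriv:
  assumes tau: "\<tau> > 0" and t: "t \<ge> 0"
  shows "(exp_tau \<tau> A has_vector_derivative (A o\<^sub>L exp_tau \<tau> A (t - \<tau>))) (at t within {0..})"
proof -
  define N where "N = nat \<lfloor>t / \<tau>\<rfloor> + 3"
  have fl: "real_of_int \<lfloor>t / \<tau>\<rfloor> > t / \<tau> - 1" by linarith
  have fl0: "\<lfloor>t / \<tau>\<rfloor> \<ge> 0" using t tau by simp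
  have Nr: "real N = real_of_int \<lfloor>t / \<tau>\<rfloor> + 3" using fl0 by (simp add: N_def)
  have Nr1: "real (N - 1) = real_of_int \<lfloor>t / \<tau>\<rfloor> + 2" using fl0 by (simp add: N_def)
  define F where "F y = (\<Sum>j = 0..N. gg \<tau> j y *\<^sub>R blinfun_pow A j)" for y
  define D where "D j = (if j = 0 then 0 else gg \<tau> (j - 1) (t - \<tau>) *\<^sub>R blinfun_pow A j)" for j
  have dF: "(F has_vector_derivative sum D {0..N}) (at t within {0..})"
    unfolding F_def
  proof (rule has_vector_derivative_sum)
    fix j assume "j \<in> {0..N}"
    show "((\<lambda>y. gg \<tau> j y *\<^sub>R blinfun_pow A j) has_vector_derivative D j) (at t within {0..})"
    proof (cases "j = 0")
      case True then show ?thesis by (simp add: D_def)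
    next
      case False
      have "((\<lambda>y. gg \<tau> j y *\<^sub>R blinfun_pow A j) has_vector_derivative
              gg \<tau> j t *\<^sub>R 0 + gg \<tau> (j - 1) (t - \<tau>) *\<^sub>R blinfun_pow A j) (at t within {0..})"
        using False by (intro has_vector_derivative_scaleR gg_deriv[OF tau t] has_vector_derivative_const) simp
      then show ?thesis using False by (simp add: D_def)
    qed
  qed
  have sD: "sum D {0..N} = A o\<^sub>L exp_tau \<tau> A (t - \<tau>)"
  proof -
    have NS: "N = Suc (N - 1)" by (simp add: N_def)
    have "sum D {0..N} = D 0 + (\<Sum>i = 0..N - 1. D (Suc i))"
      by (subst NS, subst sum.atLeast0_atMost_Suc_shift) simp
    also have "\<dots> = (\<Sum>i = 0..N - 1. A o\<^sub>L (gg \<tau> i (t - \<tau>) *\<^sub>R blinfun_pow A i))"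
      unfolding D_def by (simp, intro sum.cong refl, rule blinfun_eqI, simp add: D_def blinfun_pow_Suc scaleR_blinfun.rep_eq blinfun.scaleR_right)
    also have "\<dots> = A o\<^sub>L (\<Sum>i = 0..N - 1. gg \<tau> i (t - \<tau>) *\<^sub>R blinfun_pow A i)"
      by (rule blinfun_eqI) (simp add: blinfun.sum_left blinfun.sum_right)
    also have "(\<Sum>i = 0..N - 1. gg \<tau> i (t - \<tau>) *\<^sub>R blinfun_pow A i) = exp_tau \<tau> A (t - \<tau>)"
    proof (rule exp_tau_rep[symmetric, OF tau])
      show "- \<tau> \<le> t - \<tau>" using t by simp
      have "(t - \<tau>) / \<tau> + 1 = t / \<tau>" using tau by (simp add: diff_divide_distrib)
      then show "(t - \<tau>) / \<tau> + 1 \<le> real (N - 1)" using Nr1 fl by linarith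
    qed
    finally show ?thesis .
  qed
  have FE: "F y = exp_tau \<tau> A y" if "y \<in> {0..}" "dist y t < \<tau>" for y
  proof -
    have "y < t + \<tau>" using that by (simp add: dist_real_def)
    then have "y / \<tau> < (t + \<tau>) / \<tau>" using tau by (simp add: divide_strict_right_mono)
    also have "(t + \<tau>) / \<tau> = t / \<tau> + 1" using tau by (simp add: add_divide_distrib)
    finally have "y / \<tau> + 1 \<le> real N" using Nr fl by linarith
    moreover have "- \<tau> \<le> y" using that tau by simp
    ultimately show ?thesis unfolding F_def by (intro exp_tau_rep[symmetric] tau)
  qed
  show ?thesis
    by (rule has_vector_derivative_transform_within[OF dF[unfolded sD] tau]) (use t FE in auto)
qed




lemma blinfun_compose_id: "A o\<^sub>L id_blinfun = A"
  by (rule blinfun_eqI) simp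

lemma gg_1: "gg \<tau> 1 u = pp u" by (simp add: gg_def)

lemma exp_tau_at0: "\<tau> > 0 \<Longrightarrow> exp_tau \<tau> A 0 = id_blinfun"
  by (simp add: exp_tau_def)

lemma exp_tau_neg: "\<tau> > 0 \<Longrightarrow> - \<tau> \<le> u \<Longrightarrow> u \<le> 0 \<Longrightarrow> exp_tau \<tau> A u = id_blinfun"
  by (cases "u = 0") (simp_all add: exp_tau_def)

lemma exp_tau_mid:
  assumes tau: "\<tau> > 0" and u: "0 \<le> u" "u \<le> 2 * \<tau>"
  shows "exp_tau \<tau> A u = id_blinfun + u *\<^sub>R A + (pp (u - \<tau>) ^ 2 / 2) *\<^sub>R (A o\<^sub>L A)"
proof -
  have "exp_tau \<tau> A u = (\<Sum>j = 0..3. gg \<tau> j u *\<^sub>R blinfun_pow A j)"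
    using tau u by (intro exp_tau_rep) (auto simp: divide_le_eq)
  also have "\<dots> = gg \<tau> 0 u *\<^sub>R blinfun_pow A 0 + gg \<tau> 1 u *\<^sub>R blinfun_pow A 1
      + gg \<tau> 2 u *\<^sub>R blinfun_pow A 2 + gg \<tau> 3 u *\<^sub>R blinfun_pow A 3"
    by (simp add: numeral_3_eq_3 numeral_2_eq_2 sum.atLeast0_atMost_Suc)
  also have "gg \<tau> 3 u = 0"
  proof -
    have "pp (u - (real 3 - 1) * \<tau>) = 0" using u by (simp add: pp_def)
    then show ?thesis by (simp add: gg_def)
  qed
  also have "gg \<tau> 1 u = u" using u by (simp add: gg_def pp_def)
  also have "gg \<tau> 2 u = pp (u - \<tau>) ^ 2 / 2" by (simp add: gg_def)
  finally show ?thesis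
    by (simp add: blinfun_pow_2 blinfun_pow_Suc[of A 0, simplified] blinfun_compose_id)
qed

context
  fixes \<Omega> :: "'a::banach \<Rightarrow>\<^sub>L 'a" and \<tau> :: real
  assumes iso: "bij (blinfun_apply \<Omega>)" and tau: "\<tau> > 0"
begin

lemma invL: "inv_blinfun \<Omega> (\<Omega> w) = w"
  using inv_blinfun_left[OF iso] by (metis blinfun_apply_blinfun_compose id_blinfun.rep_eq id_apply)
lemma invR: "\<Omega> (inv_blinfun \<Omega> w) = w"
  using inv_blinfun_right[OF iso] by (metis blinfun_apply_blinfun_compose id_blinfun.rep_eq id_apply)

lemma V1: "- \<tau> \<le> u \<Longrightarrow> u \<le> \<tau> \<Longrightarrow> x1 \<tau> \<Omega> u = id_blinfun"
proof (cases "u \<le> 0")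
  case True
  assume "- \<tau> \<le> u"
  then show ?thesis using True tau by (simp add: x1_def exp_tau_neg scaleR_2[symmetric])
next
  case False
  assume "u \<le> \<tau>"
  then have "pp (u - \<tau>) = 0" by (simp add: pp_def)
  then show ?thesis using False tau \<open>u \<le> \<tau>\<close>
    by (simp add: x1_def exp_tau_mid algebra_simps scaleR_2[symmetric])
qed

lemma negsq: "(- A) o\<^sub>L (- A) = A o\<^sub>L (A::'b::real_normed_vector \<Rightarrow>\<^sub>L 'b)"
  by (rule blinfun_eqI) (simp add: uminus_blinfun.rep_eq blinfun.minus_right)

lemma V2: "0 \<le> u \<Longrightarrow> u \<le> 2 * \<tau> \<Longrightarrow> x2 \<tau> \<Omega> u = u *\<^sub>R id_blinfun"
proof -
  assume u: "0 \<le> u" "u \<le> 2 * \<tau>"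
  have E: "exp_tau \<tau> \<Omega> u - exp_tau \<tau> (- \<Omega>) u = u *\<^sub>R \<Omega> + u *\<^sub>R \<Omega>"
    using u tau by (simp add: exp_tau_mid negsq)
  show ?thesis unfolding x2_def E
    by (rule blinfun_eqI) (simp add: blinfun.add_right scaleR_blinfun.rep_eq blinfun.scaleR_right invL
        plus_blinfun.rep_eq scaleR_2[symmetric])
qed

lemma V3: "u \<le> 0 \<Longrightarrow> x2 \<tau> \<Omega> u = 0"
  unfolding x2_def exp_tau_def using tau by auto

lemma DS: "0 \<le> u \<Longrightarrow> (x2 \<tau> \<Omega> has_vector_derivative x1 \<tau> \<Omega> (u - \<tau>)) (at u within {0..})"
proof -
  assume u: "0 \<le> u"
  have lin: "bounded_linear (\<lambda>B. (1/2) *\<^sub>R (inv_blinfun \<Omega> o\<^sub>L B))"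
    by (intro bounded_linear_compose[OF bounded_linear_scaleR_right]
        bounded_bilinear.bounded_linear_right[OF bounded_bilinear_blinfun_compose])
  have "((\<lambda>u. exp_tau \<tau> \<Omega> u - exp_tau \<tau> (- \<Omega>) u) has_vector_derivative
      (\<Omega> o\<^sub>L exp_tau \<tau> \<Omega> (u - \<tau>)) - ((- \<Omega>) o\<^sub>L exp_tau \<tau> (- \<Omega>) (u - \<tau>))) (at u within {0..})"
    by (intro has_vector_derivative_diff exp_tau_deriv tau u)
  from bounded_linear.has_vector_derivative[OF lin this]
  have "(x2 \<tau> \<Omega> has_vector_derivative (1/2) *\<^sub>R (inv_blinfun \<Omega> o\<^sub>L
      ((\<Omega> o\<^sub>L exp_tau \<tau> \<Omega> (u - \<tau>)) - ((- \<Omega>) o\<^sub>L exp_tau \<tau> (- \<Omega>) (u - \<tau>))))) (at u within {0..})"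
    by (simp add: x2_def[abs_def])
  moreover have "(1/2) *\<^sub>R (inv_blinfun \<Omega> o\<^sub>L
      ((\<Omega> o\<^sub>L exp_tau \<tau> \<Omega> (u - \<tau>)) - ((- \<Omega>) o\<^sub>L exp_tau \<tau> (- \<Omega>) (u - \<tau>)))) = x1 \<tau> \<Omega> (u - \<tau>)"
    unfolding x1_def
    by (rule blinfun_eqI) (simp add: blinfun.diff_left blinfun.add_left scaleR_blinfun.rep_eq
        uminus_blinfun.rep_eq blinfun.diff_right[symmetric] blinfun.add_right[symmetric] invL)
  ultimately show ?thesis by simp
qed

lemma DC0: "0 \<le> u \<Longrightarrow> (x1 \<tau> \<Omega> has_vector_derivative (blinfun_pow \<Omega> 2 o\<^sub>L x2 \<tau> \<Omega> (u - \<tau>))) (at u within {0..})"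
proof -
  assume u: "0 \<le> u"
  have lin: "bounded_linear (\<lambda>B::'a \<Rightarrow>\<^sub>L 'a. (1/2) *\<^sub>R B)"
    by (rule bounded_linear_scaleR_right)
  have "((\<lambda>u. exp_tau \<tau> \<Omega> u + exp_tau \<tau> (- \<Omega>) u) has_vector_derivative
      (\<Omega> o\<^sub>L exp_tau \<tau> \<Omega> (u - \<tau>)) + ((- \<Omega>) o\<^sub>L exp_tau \<tau> (- \<Omega>) (u - \<tau>))) (at u within {0..})"
    by (intro has_vector_derivative_add exp_tau_deriv tau u)
  from bounded_linear.has_vector_derivative[OF lin this]
  have "(x1 \<tau> \<Omega> has_vector_derivative (1/2) *\<^sub>R
      ((\<Omega> o\<^sub>L exp_tau \<tau> \<Omega> (u - \<tau>)) + ((- \<Omega>) o\<^sub>L exp_tau \<tau> (- \<Omega>) (u - \<tau>)))) (at u within {0..})"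
    by (simp add: x1_def[abs_def])
  moreover have "(1/2) *\<^sub>R
      ((\<Omega> o\<^sub>L exp_tau \<tau> \<Omega> (u - \<tau>)) + ((- \<Omega>) o\<^sub>L exp_tau \<tau> (- \<Omega>) (u - \<tau>))) = blinfun_pow \<Omega> 2 o\<^sub>L x2 \<tau> \<Omega> (u - \<tau>)"
    unfolding x2_def blinfun_pow_2
    by (rule blinfun_eqI) (simp add: blinfun.diff_left blinfun.add_left scaleR_blinfun.rep_eq
        uminus_blinfun.rep_eq blinfun.diff_right blinfun.scaleR_right invR)
  ultimately show ?thesis by simp
qed

lemma DC: "- \<tau> \<le> u \<Longrightarrow> (x1 \<tau> \<Omega> has_vector_derivative (blinfun_pow \<Omega> 2 o\<^sub>L x2 \<tau> \<Omega> (u - \<tau>))) (at u within {- \<tau>..})"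
proof -
  assume u: "- \<tau> \<le> u"
  show ?thesis
  proof (rule glue_deriv[where b=0])
    show "- \<tau> \<le> 0" using tau by simp
    show "u \<in> {- \<tau>..}" using u by simp
    fix v assume v: "v \<in> {- \<tau>..0}"
    have d0: "((\<lambda>_. id_blinfun) has_vector_derivative 0) (at v within {- \<tau>..0})"
      by (rule has_vector_derivative_const)
    have "(x1 \<tau> \<Omega> has_vector_derivative 0) (at v within {- \<tau>..0})"
      by (rule has_vector_derivative_transform[OF v _ d0]) (use tau in \<open>auto intro!: V1\<close>)
    moreover have "x2 \<tau> \<Omega> (v - \<tau>) = 0" using v tau by (intro V3) auto
    ultimately show "(x1 \<tau> \<Omega> has_vector_derivative (blinfun_pow \<Omega> 2 o\<^sub>L x2 \<tau> \<Omega> (v - \<tau>))) (at v within {- \<tau>..0})"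
      by simp
  next
    fix v :: real assume "v \<in> {0..}"
    then show "(x1 \<tau> \<Omega> has_vector_derivative (blinfun_pow \<Omega> 2 o\<^sub>L x2 \<tau> \<Omega> (v - \<tau>))) (at v within {0..})"
      by (intro DC0) simp
  qed
qed

end




lemma cont_from_deriv:
  assumes "\<And>x. x \<in> S \<Longrightarrow> (f has_vector_derivative f' x) (at x within S)"
  shows "continuous_on S f"
  unfolding continuous_on_eq_continuous_within
  using assms has_vector_derivative_continuous by blast

lemma chain_apply:
  assumes F: "(F has_vector_derivative D) (at (g t) within T)"
    and g: "(g has_real_derivative 1) (at t within S)" and sub: "g ` S \<subseteq> T"
  shows "((\<lambda>t. blinfun_apply (L o\<^sub>L F (g t)) v) has_vector_derivative blinfun_apply (L o\<^sub>L D) v) (at t within S)"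
proof -
  have g': "(g has_vector_derivative 1) (at t within S)"
    using g by (simp add: has_real_derivative_iff_has_vector_derivative)
  have "((F \<circ> g) has_vector_derivative 1 *\<^sub>R D) (at t within S)"
    by (rule vector_diff_chain_within[OF g' has_vector_derivative_within_subset[OF F sub]])
  then have "((\<lambda>t. F (g t)) has_vector_derivative D) (at t within S)" by (simp add: o_def)
  moreover have "bounded_linear (\<lambda>B. blinfun_apply (L o\<^sub>L B) v)"
    by (intro bounded_linear_compose[OF blinfun.bounded_linear_left]
        bounded_bilinear.bounded_linear_right[OF bounded_bilinear_blinfun_compose])
  ultimately show ?thesis by (rule bounded_linear.has_vector_derivative[rotated])
qed

lemma chain_apply1:
  assumes F: "(F has_vector_derivative D) (at (g t) within T)"
    and g: "(g has_real_derivative 1) (at t within S)" and sub: "g ` S \<subseteq> T"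
  shows "((\<lambda>t. blinfun_apply (F (g t)) v) has_vector_derivative blinfun_apply D v) (at t within S)"
  using chain_apply[OF F g sub, of id_blinfun v] by simp

lemma shift_deriv: "((\<lambda>t. t + c) has_real_derivative 1) (at t within S)"
proof -
  have "((\<lambda>t. t + c) has_real_derivative 1 + 0) (at t within S)" by (intro DERIV_add DERIV_ident DERIV_const)
  then show ?thesis by simp
qed

lemma taylor_integral:
  fixes \<phi> \<phi>' \<phi>'' :: "real \<Rightarrow> 'a::banach"
  assumes tau: "\<tau> > 0" and phi: "C2_with (-2*\<tau>) 0 \<phi> \<phi>' \<phi>''"
    and t: "-2*\<tau> \<le> t" "t \<le> 0"
  shows "((\<lambda>s. (t - s) *\<^sub>R \<phi>'' s) has_integral (\<phi> t - \<phi> (-2*\<tau>) - (t + 2*\<tau>) *\<^sub>R \<phi>' (-2*\<tau>))) {-2*\<tau>..t}"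
proof -
  from phi have d1: "\<And>x. x \<in> {-2*\<tau>..0} \<Longrightarrow> (\<phi> has_vector_derivative \<phi>' x) (at x within {-2*\<tau>..0})"
    and d2: "\<And>x. x \<in> {-2*\<tau>..0} \<Longrightarrow> (\<phi>' has_vector_derivative \<phi>'' x) (at x within {-2*\<tau>..0})"
    unfolding C2_with_def by simp_all
  have sub: "{-2*\<tau>..t} \<subseteq> {-2*\<tau>..0}" using t by auto
  have ftc: "(\<phi>' has_integral \<phi> t - \<phi> (-2*\<tau>)) {-2*\<tau>..t}"
    by (rule fundamental_theorem_of_calculus[OF t(1)])
       (use sub in \<open>blast intro: has_vector_derivative_within_subset[OF d1]\<close>)
  have cphi': "continuous_on {-2*\<tau>..t} \<phi>'"
    by (rule cont_from_deriv) (use sub in \<open>blast intro: has_vector_derivative_within_subset[OF d2]\<close>)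
  have bil: "bounded_bilinear (\<lambda>(v::'a) (r::real). r *\<^sub>R v)"
    by (rule bounded_bilinear.flip[OF bounded_bilinear_scaleR])
  show ?thesis
  proof (rule integration_by_parts_interior[OF bil t(1) cphi', where g="\<lambda>s. t - s" and g'="\<lambda>_. -1"])
    show "continuous_on {-2*\<tau>..t} (\<lambda>s. t - s)" by (intro continuous_intros)
    fix x assume x: "x \<in> {-2*\<tau><..<t}"
    have x0: "x \<in> {-2*\<tau><..<0}" using x t by simp
    have "(\<phi>' has_vector_derivative \<phi>'' x) (at x within {-2*\<tau>..0})" using d2 x0 by simp
    then have "(\<phi>' has_vector_derivative \<phi>'' x) (at x within {-2*\<tau><..<0})"
      by (rule has_vector_derivative_within_subset) (simp add: subset_eq)
    then show "(\<phi>' has_vector_derivative \<phi>'' x) (at x)"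
      by (rule has_vector_derivative_within_open[OF x0 open_greaterThanLessThan, THEN iffD1])
    show "((\<lambda>s. t - s) has_vector_derivative -1) (at x)"
    proof -
      have "((\<lambda>s. t - s) has_real_derivative 0 - 1) (at x)" by (intro DERIV_diff DERIV_ident DERIV_const)
      then show ?thesis by (simp add: has_real_derivative_iff_has_vector_derivative)
    qed
  next
    show "((\<lambda>x. (-1) *\<^sub>R \<phi>' x) has_integral
          ((t - t) *\<^sub>R \<phi>' t - (t - -2*\<tau>) *\<^sub>R \<phi>' (-2*\<tau>) - (\<phi> t - \<phi> (-2*\<tau>) - (t + 2*\<tau>) *\<^sub>R \<phi>' (-2*\<tau>)))) {-2*\<tau>..t}"
    proof -
      have e: "(t - t) *\<^sub>R \<phi>' t - (t - -2*\<tau>) *\<^sub>R \<phi>' (-2*\<tau>) - (\<phi> t - \<phi> (-2*\<tau>) - (t + 2*\<tau>) *\<^sub>R \<phi>' (-2*\<tau>))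
          = - (\<phi> t - \<phi> (-2*\<tau>))" by simp
      show ?thesis unfolding e using has_integral_neg[OF ftc] by simp
    qed
  qed
qed




definition XX :: "('a::banach \<Rightarrow>\<^sub>L 'a) \<Rightarrow> real \<Rightarrow> (real \<Rightarrow> 'a) \<Rightarrow> (real \<Rightarrow> 'a) \<Rightarrow> (real \<Rightarrow> 'a) \<Rightarrow> real \<Rightarrow> 'a" where
  "XX \<Omega> \<tau> \<phi> \<phi>' \<phi>'' t = x1 \<tau> \<Omega> (t + \<tau>) (\<phi> (-2*\<tau>)) + x2 \<tau> \<Omega> (t + 2*\<tau>) (\<phi>' (-2*\<tau>))
      + integral {-2*\<tau>..0} (\<lambda>s. x2 \<tau> \<Omega> (t - s) (\<phi>'' s))"

definition XX1 :: "('a::banach \<Rightarrow>\<^sub>L 'a) \<Rightarrow> real \<Rightarrow> (real \<Rightarrow> 'a) \<Rightarrow> (real \<Rightarrow> 'a) \<Rightarrow> (real \<Rightarrow> 'a) \<Rightarrow> real \<Rightarrow> 'a" where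
  "XX1 \<Omega> \<tau> \<phi> \<phi>' \<phi>'' t = (blinfun_pow \<Omega> 2 o\<^sub>L x2 \<tau> \<Omega> t) (\<phi> (-2*\<tau>)) + x1 \<tau> \<Omega> (t + \<tau>) (\<phi>' (-2*\<tau>))
      + integral {-2*\<tau>..0} (\<lambda>s. x1 \<tau> \<Omega> (t - (s + \<tau>)) (\<phi>'' s))"

definition XX2 :: "('a::banach \<Rightarrow>\<^sub>L 'a) \<Rightarrow> real \<Rightarrow> (real \<Rightarrow> 'a) \<Rightarrow> (real \<Rightarrow> 'a) \<Rightarrow> (real \<Rightarrow> 'a) \<Rightarrow> real \<Rightarrow> 'a" where
  "XX2 \<Omega> \<tau> \<phi> \<phi>' \<phi>'' t = (blinfun_pow \<Omega> 2 o\<^sub>L x1 \<tau> \<Omega> (t - \<tau>)) (\<phi> (-2*\<tau>)) + (blinfun_pow \<Omega> 2 o\<^sub>L x2 \<tau> \<Omega> t) (\<phi>' (-2*\<tau>))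
      + integral {-2*\<tau>..0} (\<lambda>s. (blinfun_pow \<Omega> 2 o\<^sub>L x2 \<tau> \<Omega> (t - (s + \<tau>) - \<tau>)) (\<phi>'' s))"

lemma shift_deriv2: "((\<lambda>t. t - c) has_real_derivative 1) (at t within S)"
proof -
  have "((\<lambda>t. t - c) has_real_derivative 1 - 0) (at t within S)" by (intro DERIV_diff DERIV_ident DERIV_const)
  then show ?thesis by simp
qed

context
  fixes \<Omega> :: "'a::banach \<Rightarrow>\<^sub>L 'a" and \<tau> :: real and \<phi> \<phi>' \<phi>'' :: "real \<Rightarrow> 'a"
  assumes iso: "bij (blinfun_apply \<Omega>)" and tau: "\<tau> > 0"
    and phi: "C2_with (-2*\<tau>) 0 \<phi> \<phi>' \<phi>''"
begin

lemma d1: "t \<in> {-2*\<tau>..0} \<Longrightarrow> (\<phi> has_vector_derivative \<phi>' t) (at t within {-2*\<tau>..0})"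
  using phi unfolding C2_with_def by simp
lemma d2: "t \<in> {-2*\<tau>..0} \<Longrightarrow> (\<phi>' has_vector_derivative \<phi>'' t) (at t within {-2*\<tau>..0})"
  using phi unfolding C2_with_def by simp
lemma cphi'': "continuous_on {-2*\<tau>..0} \<phi>''"
  using phi unfolding C2_with_def by simp
lemma cphi': "continuous_on {-2*\<tau>..0} \<phi>'"
  by (rule cont_from_deriv) (rule d2)

lemma cx2: "continuous_on UNIV (x2 \<tau> \<Omega>)"
proof -
  have "continuous_on ({..0} \<union> {0..}) (x2 \<tau> \<Omega>)"
  proof (rule continuous_on_closed_Un)
    show "continuous_on {..0} (x2 \<tau> \<Omega>)"
      by (rule continuous_on_eq[OF continuous_on_const[of _ 0]]) (use V3[OF iso tau] in auto)
    show "continuous_on {0..} (x2 \<tau> \<Omega>)"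
      by (rule cont_from_deriv) (use DS[OF iso tau] in simp)
  qed auto
  moreover have "{..0} \<union> {0..} = (UNIV :: real set)" by auto
  ultimately show ?thesis by simp
qed

lemma cx1: "continuous_on {-\<tau>..} (x1 \<tau> \<Omega>)"
  by (rule cont_from_deriv) (use DC[OF iso tau] in simp)

lemma XA: "t \<in> {-2*\<tau>..0} \<Longrightarrow> XX \<Omega> \<tau> \<phi> \<phi>' \<phi>'' t = \<phi> t"
proof -
  assume t: "t \<in> {-2*\<tau>..0}"
  have x1v: "x1 \<tau> \<Omega> (t + \<tau>) = id_blinfun" using t by (intro V1[OF iso tau]) auto
  have x2v: "x2 \<tau> \<Omega> (t + 2*\<tau>) = (t + 2*\<tau>) *\<^sub>R id_blinfun" using t by (intro V2[OF iso tau]) auto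
  have int: "((\<lambda>s. (t - s) *\<^sub>R \<phi>'' s) has_integral (\<phi> t - \<phi> (-2*\<tau>) - (t + 2*\<tau>) *\<^sub>R \<phi>' (-2*\<tau>))) {-2*\<tau>..t}"
    using t by (intro taylor_integral[OF tau phi]) auto
  have "((\<lambda>s. if s \<in> cbox (-2*\<tau>) t then (t - s) *\<^sub>R \<phi>'' s else 0) has_integral
        (\<phi> t - \<phi> (-2*\<tau>) - (t + 2*\<tau>) *\<^sub>R \<phi>' (-2*\<tau>))) (cbox (-2*\<tau>) 0)"
    by (rule has_integral_restrict_closed_subinterval) (use int t in \<open>simp_all add: cbox_interval\<close>)
  moreover have eqs: "x2 \<tau> \<Omega> (t - s) (\<phi>'' s) = (if s \<in> cbox (-2*\<tau>) t then (t - s) *\<^sub>R \<phi>'' s else 0)"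
    if s: "s \<in> cbox (-2*\<tau>) 0" for s
  proof (cases "s \<le> t")
    case True
    then have "x2 \<tau> \<Omega> (t - s) = (t - s) *\<^sub>R id_blinfun" using s t by (intro V2[OF iso tau]) auto
    then show ?thesis using True s by (simp add: scaleR_blinfun.rep_eq)
  next
    case False
    then have "x2 \<tau> \<Omega> (t - s) = 0" by (intro V3[OF iso tau]) auto
    then show ?thesis using False by simp
  qed
  ultimately have "((\<lambda>s. x2 \<tau> \<Omega> (t - s) (\<phi>'' s)) has_integral
        (\<phi> t - \<phi> (-2*\<tau>) - (t + 2*\<tau>) *\<^sub>R \<phi>' (-2*\<tau>))) {-2*\<tau>..0}"
    by (subst has_integral_cong[OF eqs]) (simp_all add: cbox_interval)
  then have "integral {-2*\<tau>..0} (\<lambda>s. x2 \<tau> \<Omega> (t - s) (\<phi>'' s)) = \<phi> t - \<phi> (-2*\<tau>) - (t + 2*\<tau>) *\<^sub>R \<phi>' (-2*\<tau>)"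
    by (rule integral_unique)
  then show ?thesis unfolding XX_def x1v x2v by (simp add: scaleR_blinfun.rep_eq)
qed


lemma DK1: "t \<ge> 0 \<Longrightarrow> ((\<lambda>t. integral {-2*\<tau>..0} (\<lambda>s. x2 \<tau> \<Omega> (t - s) (\<phi>'' s))) has_vector_derivative
    integral {-2*\<tau>..0} (\<lambda>s. x1 \<tau> \<Omega> (t - (s + \<tau>)) (\<phi>'' s))) (at t within {0..})"
proof -
  assume t: "t \<ge> 0"
  have "((\<lambda>x. integral (cbox (-2*\<tau>) 0) (\<lambda>s. x2 \<tau> \<Omega> (x - s) (\<phi>'' s))) has_vector_derivative
    integral (cbox (-2*\<tau>) 0) (\<lambda>s. x1 \<tau> \<Omega> (t - (s + \<tau>)) (\<phi>'' s))) (at t within {0..})"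
  proof (rule leibniz_rule_vector_derivative)
    fix x s assume x: "x \<in> {0::real..}" and s: "s \<in> cbox (-2*\<tau>) 0"
    have "(x2 \<tau> \<Omega> has_vector_derivative x1 \<tau> \<Omega> (x - s - \<tau>)) (at (x - s) within {0..})"
      using x s by (intro DS[OF iso tau]) (simp add: cbox_interval)
    then have D: "(x2 \<tau> \<Omega> has_vector_derivative x1 \<tau> \<Omega> (x - (s + \<tau>))) (at (x - s) within {0..})"
      by (simp add: diff_diff_eq)
    show "((\<lambda>x. x2 \<tau> \<Omega> (x - s) (\<phi>'' s)) has_vector_derivative x1 \<tau> \<Omega> (x - (s + \<tau>)) (\<phi>'' s)) (at x within {0..})"
      by (rule chain_apply1[OF D shift_deriv2]) (use s in \<open>auto simp: cbox_interval\<close>)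
  next
    fix x :: real assume x: "x \<in> {0..}"
    have "continuous_on {-2*\<tau>..0} (\<lambda>s. x2 \<tau> \<Omega> (x - s) (\<phi>'' s))"
      by (intro blinfun.continuous_on cphi'' continuous_on_compose2[OF cx2] continuous_intros) auto
    then show "(\<lambda>s. x2 \<tau> \<Omega> (x - s) (\<phi>'' s)) integrable_on cbox (-2*\<tau>) 0"
      by (simp add: cbox_interval integrable_continuous_interval)
  next
    have c1: "continuous_on ({0..} \<times> cbox (-2*\<tau>) 0) (\<lambda>p. x1 \<tau> \<Omega> (fst p - (snd p + \<tau>)))"
      by (rule continuous_on_compose2[OF cx1]) (auto intro!: continuous_intros simp: cbox_interval)
    have c2: "continuous_on ({0..} \<times> cbox (-2*\<tau>) 0) (\<lambda>p. \<phi>'' (snd p))"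
      by (rule continuous_on_compose2[OF cphi'' continuous_on_snd]) (auto simp: cbox_interval)
    have "continuous_on ({0..} \<times> cbox (-2*\<tau>) 0) (\<lambda>p. x1 \<tau> \<Omega> (fst p - (snd p + \<tau>)) (\<phi>'' (snd p)))"
      by (rule blinfun.continuous_on[OF c1 c2])
    then show "continuous_on ({0..} \<times> cbox (-2*\<tau>) 0) (\<lambda>(x, s). x1 \<tau> \<Omega> (x - (s + \<tau>)) (\<phi>'' s))"
      by (simp add: split_beta)
  qed (use t in auto)
  then show ?thesis by (simp add: cbox_interval)
qed


lemma DK2: "t \<ge> 0 \<Longrightarrow> ((\<lambda>t. integral {-2*\<tau>..0} (\<lambda>s. x1 \<tau> \<Omega> (t - (s + \<tau>)) (\<phi>'' s))) has_vector_derivative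
    integral {-2*\<tau>..0} (\<lambda>s. (blinfun_pow \<Omega> 2 o\<^sub>L x2 \<tau> \<Omega> (t - (s + \<tau>) - \<tau>)) (\<phi>'' s))) (at t within {0..})"
proof -
  assume t: "t \<ge> 0"
  have "((\<lambda>x. integral (cbox (-2*\<tau>) 0) (\<lambda>s. x1 \<tau> \<Omega> (x - (s + \<tau>)) (\<phi>'' s))) has_vector_derivative
    integral (cbox (-2*\<tau>) 0) (\<lambda>s. (blinfun_pow \<Omega> 2 o\<^sub>L x2 \<tau> \<Omega> (t - (s + \<tau>) - \<tau>)) (\<phi>'' s))) (at t within {0..})"
  proof (rule leibniz_rule_vector_derivative)
    fix x s assume x: "x \<in> {0::real..}" and s: "s \<in> cbox (-2*\<tau>) 0"
    have D: "(x1 \<tau> \<Omega> has_vector_derivative (blinfun_pow \<Omega> 2 o\<^sub>L x2 \<tau> \<Omega> (x - (s + \<tau>) - \<tau>))) (at (x - (s + \<tau>)) within {-\<tau>..})"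
      using x s by (intro DC[OF iso tau]) (simp add: cbox_interval)
    show "((\<lambda>x. x1 \<tau> \<Omega> (x - (s + \<tau>)) (\<phi>'' s)) has_vector_derivative (blinfun_pow \<Omega> 2 o\<^sub>L x2 \<tau> \<Omega> (x - (s + \<tau>) - \<tau>)) (\<phi>'' s)) (at x within {0..})"
      by (rule chain_apply1[OF D shift_deriv2]) (use s in \<open>auto simp: cbox_interval\<close>)
  next
    fix x :: real assume x: "x \<in> {0..}"
    have "continuous_on {-2*\<tau>..0} (\<lambda>s. x1 \<tau> \<Omega> (x - (s + \<tau>)) (\<phi>'' s))"
      by (intro blinfun.continuous_on cphi'' continuous_on_compose2[OF cx1] continuous_intros) (use x in auto)
    then show "(\<lambda>s. x1 \<tau> \<Omega> (x - (s + \<tau>)) (\<phi>'' s)) integrable_on cbox (-2*\<tau>) 0"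
      by (simp add: cbox_interval integrable_continuous_interval)
  next
    have c1: "continuous_on ({0..} \<times> cbox (-2*\<tau>) 0) (\<lambda>p. x2 \<tau> \<Omega> (fst p - (snd p + \<tau>) - \<tau>))"
      by (rule continuous_on_compose2[OF cx2]) (auto intro!: continuous_intros)
    have c2: "continuous_on ({0..} \<times> cbox (-2*\<tau>) 0) (\<lambda>p. \<phi>'' (snd p))"
      by (rule continuous_on_compose2[OF cphi'' continuous_on_snd]) (auto simp: cbox_interval)
    have "continuous_on ({0..} \<times> cbox (-2*\<tau>) 0) (\<lambda>p. blinfun_pow \<Omega> 2 (x2 \<tau> \<Omega> (fst p - (snd p + \<tau>) - \<tau>) (\<phi>'' (snd p))))"
      by (intro blinfun.continuous_on[OF continuous_on_const] blinfun.continuous_on[OF c1 c2])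
    then show "continuous_on ({0..} \<times> cbox (-2*\<tau>) 0) (\<lambda>(x, s). (blinfun_pow \<Omega> 2 o\<^sub>L x2 \<tau> \<Omega> (x - (s + \<tau>) - \<tau>)) (\<phi>'' s))"
      by (simp add: split_beta)
  qed (use t in auto)
  then show ?thesis by (simp add: cbox_interval)
qed

lemma DX: "t \<ge> 0 \<Longrightarrow> (XX \<Omega> \<tau> \<phi> \<phi>' \<phi>'' has_vector_derivative XX1 \<Omega> \<tau> \<phi> \<phi>' \<phi>'' t) (at t within {0..})"
proof -
  assume t: "t \<ge> 0"
  have D1: "(x1 \<tau> \<Omega> has_vector_derivative (blinfun_pow \<Omega> 2 o\<^sub>L x2 \<tau> \<Omega> (t + \<tau> - \<tau>))) (at (t + \<tau>) within {-\<tau>..})"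
    using t tau by (intro DC[OF iso tau]) simp
  have T1: "((\<lambda>t. x1 \<tau> \<Omega> (t + \<tau>) (\<phi> (-2*\<tau>))) has_vector_derivative (blinfun_pow \<Omega> 2 o\<^sub>L x2 \<tau> \<Omega> t) (\<phi> (-2*\<tau>))) (at t within {0..})"
  proof -
    have sub: "(\<lambda>t. t + \<tau>) ` {0..} \<subseteq> {-\<tau>..}" using tau by auto
    show ?thesis using chain_apply1[OF D1 shift_deriv sub, of "\<phi> (-2*\<tau>)"] by simp
  qed
  have D2: "(x2 \<tau> \<Omega> has_vector_derivative x1 \<tau> \<Omega> (t + 2*\<tau> - \<tau>)) (at (t + 2*\<tau>) within {0..})"
    using t tau by (intro DS[OF iso tau]) simp
  have e: "t + 2*\<tau> - \<tau> = t + \<tau>" by simp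
  have T2: "((\<lambda>t. x2 \<tau> \<Omega> (t + 2*\<tau>) (\<phi>' (-2*\<tau>))) has_vector_derivative x1 \<tau> \<Omega> (t + \<tau>) (\<phi>' (-2*\<tau>))) (at t within {0..})"
  proof -
    have sub: "(\<lambda>t. t + 2*\<tau>) ` {0..} \<subseteq> {0..}" using tau by auto
    show ?thesis using chain_apply1[OF D2 shift_deriv sub, of "\<phi>' (-2*\<tau>)"] unfolding e by simp
  qed
  show ?thesis
    unfolding XX_def[abs_def] XX1_def
    by (intro has_vector_derivative_add T1 T2 DK1 t)
qed

lemma DX1: "t \<ge> 0 \<Longrightarrow> (XX1 \<Omega> \<tau> \<phi> \<phi>' \<phi>'' has_vector_derivative XX2 \<Omega> \<tau> \<phi> \<phi>' \<phi>'' t) (at t within {0..})"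
proof -
  assume t: "t \<ge> 0"
  have D1: "(x2 \<tau> \<Omega> has_vector_derivative x1 \<tau> \<Omega> (t - 0 - \<tau>)) (at (t - 0) within {0..})"
    using t by (intro DS[OF iso tau]) simp
  have T1: "((\<lambda>t. (blinfun_pow \<Omega> 2 o\<^sub>L x2 \<tau> \<Omega> (t - 0)) (\<phi> (-2*\<tau>))) has_vector_derivative
      (blinfun_pow \<Omega> 2 o\<^sub>L x1 \<tau> \<Omega> (t - 0 - \<tau>)) (\<phi> (-2*\<tau>))) (at t within {0..})"
    by (rule chain_apply[OF D1 shift_deriv2]) auto
  have D2: "(x1 \<tau> \<Omega> has_vector_derivative (blinfun_pow \<Omega> 2 o\<^sub>L x2 \<tau> \<Omega> (t + \<tau> - \<tau>))) (at (t + \<tau>) within {-\<tau>..})"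
    using t tau by (intro DC[OF iso tau]) simp
  have T2: "((\<lambda>t. x1 \<tau> \<Omega> (t + \<tau>) (\<phi>' (-2*\<tau>))) has_vector_derivative (blinfun_pow \<Omega> 2 o\<^sub>L x2 \<tau> \<Omega> t) (\<phi>' (-2*\<tau>))) (at t within {0..})"
  proof -
    have sub: "(\<lambda>t. t + \<tau>) ` {0..} \<subseteq> {-\<tau>..}" using tau by auto
    show ?thesis using chain_apply1[OF D2 shift_deriv sub, of "\<phi>' (-2*\<tau>)"] by simp
  qed
  show ?thesis
    unfolding XX1_def[abs_def] XX2_def
    using has_vector_derivative_add[OF has_vector_derivative_add[OF T1 T2] DK2[OF t]] by simp
qed


lemma X2eq: "t \<ge> 0 \<Longrightarrow> XX2 \<Omega> \<tau> \<phi> \<phi>' \<phi>'' t = blinfun_pow \<Omega> 2 (XX \<Omega> \<tau> \<phi> \<phi>' \<phi>'' (t - 2*\<tau>))"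
proof -
  assume t: "t \<ge> 0"
  have c: "continuous_on {-2*\<tau>..0} (\<lambda>s. x2 \<tau> \<Omega> (t - 2*\<tau> - s) (\<phi>'' s))"
    by (intro blinfun.continuous_on cphi'' continuous_on_compose2[OF cx2] continuous_intros) auto
  have int: "(\<lambda>s. x2 \<tau> \<Omega> (t - 2*\<tau> - s) (\<phi>'' s)) integrable_on {-2*\<tau>..0}"
    by (rule integrable_continuous_interval[OF c])
  have e1: "t - (s + \<tau>) - \<tau> = t - 2*\<tau> - s" for s by simp
  have e2: "t - 2*\<tau> + \<tau> = t - \<tau>" "t - 2*\<tau> + 2*\<tau> = t" by simp_all
  have "integral {-2*\<tau>..0} (\<lambda>s. (blinfun_pow \<Omega> 2 o\<^sub>L x2 \<tau> \<Omega> (t - (s + \<tau>) - \<tau>)) (\<phi>'' s))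
      = blinfun_pow \<Omega> 2 (integral {-2*\<tau>..0} (\<lambda>s. x2 \<tau> \<Omega> (t - 2*\<tau> - s) (\<phi>'' s)))"
    unfolding e1 using integral_blinfun_apply[OF int, of "blinfun_pow \<Omega> 2"] by simp
  then show ?thesis
    unfolding XX2_def XX_def e2 by (simp add: blinfun.add_right)
qed

lemma X10: "XX1 \<Omega> \<tau> \<phi> \<phi>' \<phi>'' 0 = \<phi>' 0"
proof -
  have ftc: "(\<phi>'' has_integral \<phi>' 0 - \<phi>' (-2*\<tau>)) {-2*\<tau>..0}"
    by (rule fundamental_theorem_of_calculus) (use tau d2 in auto)
  have "integral {-2*\<tau>..0} (\<lambda>s. x1 \<tau> \<Omega> (0 - (s + \<tau>)) (\<phi>'' s)) = integral {-2*\<tau>..0} \<phi>''"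
  proof (rule integral_cong)
    fix s assume s: "s \<in> {-2*\<tau>..0}"
    have "x1 \<tau> \<Omega> (0 - (s + \<tau>)) = id_blinfun" using s by (intro V1[OF iso tau]) auto
    then show "x1 \<tau> \<Omega> (0 - (s + \<tau>)) (\<phi>'' s) = \<phi>'' s" by simp
  qed
  also have "\<dots> = \<phi>' 0 - \<phi>' (-2*\<tau>)" using ftc by (rule integral_unique)
  finally have i: "integral {-2*\<tau>..0} (\<lambda>s. x1 \<tau> \<Omega> (0 - (s + \<tau>)) (\<phi>'' s)) = \<phi>' 0 - \<phi>' (-2*\<tau>)" .
  have "x2 \<tau> \<Omega> 0 = 0" by (rule V3[OF iso tau]) simp
  moreover have "x1 \<tau> \<Omega> (0 + \<tau>) = id_blinfun" using tau by (intro V1[OF iso tau]) auto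
  ultimately show ?thesis unfolding XX1_def i by simp
qed

definition "XP t = (if t \<le> 0 then \<phi>' t else XX1 \<Omega> \<tau> \<phi> \<phi>' \<phi>'' t)"

lemma XP_R: "t \<ge> 0 \<Longrightarrow> XP t = XX1 \<Omega> \<tau> \<phi> \<phi>' \<phi>'' t"
  using X10 by (auto simp: XP_def)

lemma DXg: "t \<in> {-2*\<tau>..} \<Longrightarrow> (XX \<Omega> \<tau> \<phi> \<phi>' \<phi>'' has_vector_derivative XP t) (at t within {-2*\<tau>..})"
proof (rule glue_deriv[where b=0])
  show "-2*\<tau> \<le> 0" using tau by simp
next
  fix v assume v: "v \<in> {-2*\<tau>..0}"
  have "(XX \<Omega> \<tau> \<phi> \<phi>' \<phi>'' has_vector_derivative \<phi>' v) (at v within {-2*\<tau>..0})"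
    by (rule has_vector_derivative_transform[OF v _ d1[OF v]]) (rule XA)
  then show "(XX \<Omega> \<tau> \<phi> \<phi>' \<phi>'' has_vector_derivative XP v) (at v within {-2*\<tau>..0})"
    using v by (simp add: XP_def)
next
  fix v :: real assume v: "v \<in> {0..}"
  then show "(XX \<Omega> \<tau> \<phi> \<phi>' \<phi>'' has_vector_derivative XP v) (at v within {0..})"
    using DX[of v] XP_R[of v] by simp
qed

lemma cXX: "continuous_on {-2*\<tau>..} (XX \<Omega> \<tau> \<phi> \<phi>' \<phi>'')"
  by (rule cont_from_deriv) (rule DXg)

lemma existence: "classical_solution \<Omega> \<tau> (\<lambda>t. 0) \<phi> (XX \<Omega> \<tau> \<phi> \<phi>' \<phi>'')"
  unfolding classical_solution_def
proof (intro exI conjI ballI)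
  show "\<And>t. t \<in> {-2*\<tau>..} \<Longrightarrow> (XX \<Omega> \<tau> \<phi> \<phi>' \<phi>'' has_vector_derivative XP t) (at t within {-2*\<tau>..})"
    by (rule DXg)
  show "continuous_on {-2*\<tau>..} XP"
  proof -
    have "continuous_on ({-2*\<tau>..0} \<union> {0..}) XP"
    proof (rule continuous_on_closed_Un)
      show "continuous_on {-2*\<tau>..0} XP"
        by (rule continuous_on_eq[OF cphi']) (simp add: XP_def)
      have "continuous_on {0..} (XX1 \<Omega> \<tau> \<phi> \<phi>' \<phi>'')"
        by (rule cont_from_deriv) (use DX1 in simp)
      then show "continuous_on {0..} XP"
        by (rule continuous_on_eq) (simp add: XP_R)
    qed auto
    moreover have "{-2*\<tau>..0} \<union> {0..} = {-2*\<tau>..}" using tau by auto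
    ultimately show ?thesis by simp
  qed
  show "\<And>t. t \<in> {-2*\<tau>..0} \<Longrightarrow> (XP has_vector_derivative \<phi>'' t) (at t within {-2*\<tau>..0})"
  proof -
    fix t assume t: "t \<in> {-2*\<tau>..0}"
    show "(XP has_vector_derivative \<phi>'' t) (at t within {-2*\<tau>..0})"
      by (rule has_vector_derivative_transform[OF t _ d2[OF t]]) (simp add: XP_def)
  qed
  show "continuous_on {-2*\<tau>..0} \<phi>''" by (rule cphi'')
  show "\<And>t. t \<in> {0..} \<Longrightarrow> (XP has_vector_derivative XX2 \<Omega> \<tau> \<phi> \<phi>' \<phi>'' t) (at t within {0..})"
  proof -
    fix t :: real assume t: "t \<in> {0..}"
    show "(XP has_vector_derivative XX2 \<Omega> \<tau> \<phi> \<phi>' \<phi>'' t) (at t within {0..})"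
      by (rule has_vector_derivative_transform[OF t _ DX1]) (use t XP_R in auto)
  qed
  show "continuous_on {0..} (XX2 \<Omega> \<tau> \<phi> \<phi>' \<phi>'')"
  proof -
    have "continuous_on {0..} (\<lambda>t. blinfun_pow \<Omega> 2 (XX \<Omega> \<tau> \<phi> \<phi>' \<phi>'' (t - 2*\<tau>)))"
      by (intro blinfun.continuous_on continuous_on_const continuous_on_compose2[OF cXX] continuous_intros) auto
    then show ?thesis by (rule continuous_on_eq) (simp add: X2eq)
  qed
  show "\<And>t. t \<in> {0..} \<Longrightarrow> XX2 \<Omega> \<tau> \<phi> \<phi>' \<phi>'' t - blinfun_pow \<Omega> 2 (XX \<Omega> \<tau> \<phi> \<phi>' \<phi>'' (t - 2*\<tau>)) = 0"
    by (simp add: X2eq)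
  show "\<And>t. t \<in> {-2*\<tau>..0} \<Longrightarrow> XX \<Omega> \<tau> \<phi> \<phi>' \<phi>'' t = \<phi> t" by (rule XA)
qed


lemma uniqueness:
  assumes y: "classical_solution \<Omega> \<tau> (\<lambda>t. 0) \<phi> y" and t: "t \<ge> -2*\<tau>"
  shows "y t = XX \<Omega> \<tau> \<phi> \<phi>' \<phi>'' t"
proof -
  let ?X = "XX \<Omega> \<tau> \<phi> \<phi>' \<phi>''"
  obtain y' yl'' yr'' where
    dy: "\<And>t. t \<in> {-2*\<tau>..} \<Longrightarrow> (y has_vector_derivative y' t) (at t within {-2*\<tau>..})" and
    dy': "\<And>t. t \<in> {0..} \<Longrightarrow> (y' has_vector_derivative yr'' t) (at t within {0..})" and
    eqy: "\<And>t. t \<in> {0..} \<Longrightarrow> yr'' t - blinfun_pow \<Omega> 2 (y (t - 2*\<tau>)) = 0" and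
    yphi: "\<And>t. t \<in> {-2*\<tau>..0} \<Longrightarrow> y t = \<phi> t"
    using y unfolding classical_solution_def by blast
  define z where "z t = y t - ?X t" for t
  define z' where "z' t = y' t - XP t" for t
  define zr where "zr t = yr'' t - XX2 \<Omega> \<tau> \<phi> \<phi>' \<phi>'' t" for t
  have dz: "(z has_vector_derivative z' t) (at t within {-2*\<tau>..})" if "t \<in> {-2*\<tau>..}" for t
    unfolding z_def[abs_def] z'_def using that by (intro has_vector_derivative_diff dy DXg)
  have dz': "(z' has_vector_derivative zr t) (at t within {0..})" if "t \<in> {0..}" for t
    unfolding z'_def[abs_def] zr_def
  proof (rule has_vector_derivative_diff[OF dy'[OF that]])
    show "(XP has_vector_derivative XX2 \<Omega> \<tau> \<phi> \<phi>' \<phi>'' t) (at t within {0..})"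
      by (rule has_vector_derivative_transform[OF that _ DX1]) (use that XP_R in auto)
  qed
  have zr: "zr t = blinfun_pow \<Omega> 2 (z (t - 2*\<tau>))" if "t \<ge> 0" for t
    using eqy[of t] X2eq[of t] that by (simp add: zr_def z_def blinfun.diff_right)
  have z0: "z t = 0" if "t \<in> {-2*\<tau>..0}" for t
    using yphi[OF that] XA[OF that] by (simp add: z_def)
  have z'0: "z' 0 = 0"
  proof -
    have 0: "(0::real) \<in> {-2*\<tau>..0}" using tau by simp
    have a: "(z has_vector_derivative z' 0) (at 0 within cbox (-2*\<tau>) 0)"
      by (rule has_vector_derivative_within_subset[OF dz]) (use tau in \<open>auto simp: cbox_interval\<close>)
    have b: "(z has_vector_derivative 0) (at 0 within cbox (-2*\<tau>) 0)"
      by (rule has_vector_derivative_transform[OF _ _ has_vector_derivative_const[of 0]])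
         (use tau z0 in \<open>auto simp: cbox_interval\<close>)
    show ?thesis
      by (rule vector_derivative_unique_within_closed_interval[OF _ _ a b]) (use tau in \<open>auto simp: cbox_interval\<close>)
  qed
  have ind: "\<forall>t\<in>{-2*\<tau>..2 * real n * \<tau>}. z t = 0" for n :: nat
  proof (induction n)
    case 0
    then show ?case using z0 by simp
  next
    case (Suc n)
    define T where "T = 2 * real (Suc n) * \<tau>"
    have T0: "T \<ge> 0" using tau by (simp add: T_def)
    have zr0: "zr t = 0" if "t \<in> {0..T}" for t
    proof -
      have "t - 2*\<tau> \<in> {-2*\<tau>..2 * real n * \<tau>}" using that by (auto simp: T_def algebra_simps)
      then have "z (t - 2*\<tau>) = 0" using Suc.IH by blast
      then show ?thesis using zr[of t] that by simp
    qed
    have H1: "(z' has_vector_derivative 0) (at t within {0..T})" if "t \<in> {0..T}" for t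
    proof -
      have "(z' has_vector_derivative zr t) (at t within {0..T})"
        by (rule has_vector_derivative_within_subset[OF dz']) (use that in auto)
      then show ?thesis using zr0[OF that] by simp
    qed
    have "\<exists>c. \<forall>t\<in>{0..T}. z' t = c"
      using has_vector_derivative_zero_constant[OF convex_real_interval(5) H1] by metis
    then obtain c where c: "\<And>t. t \<in> {0..T} \<Longrightarrow> z' t = c" by blast
    have c0: "c = 0" using c[of 0] T0 z'0 by simp
    have H2: "(z has_vector_derivative 0) (at t within {0..T})" if "t \<in> {0..T}" for t
    proof -
      have "(z has_vector_derivative z' t) (at t within {0..T})"
        by (rule has_vector_derivative_within_subset[OF dz]) (use that tau in auto)
      then show ?thesis using c[OF that] c0 by simp
    qed
    have "\<exists>d. \<forall>t\<in>{0..T}. z t = d"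
      using has_vector_derivative_zero_constant[OF convex_real_interval(5) H2] by metis
    then obtain d where d: "\<And>t. t \<in> {0..T} \<Longrightarrow> z t = d" by blast
    have d0: "d = 0" using d[of 0] T0 z0[of 0] tau by simp
    show ?case
    proof
      fix t assume "t \<in> {-2*\<tau>..2 * real (Suc n) * \<tau>}"
      then show "z t = 0" using z0 d d0 by (cases "t \<le> 0") (auto simp: T_def)
    qed
  qed
  obtain n :: nat where n: "t / (2*\<tau>) \<le> real n" using real_arch_simple by blast
  then have "t \<le> 2 * real n * \<tau>" using tau by (simp add: divide_le_eq mult.commute mult.left_commute)
  then have "z t = 0" using ind[of n] t by auto
  then show ?thesis by (simp add: z_def)
qed

end


theorem mainTheorem5:
  fixes \<Omega> :: "'a::banach \<Rightarrow>\<^sub>L 'a" and \<tau> :: real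
    and \<phi> \<phi>' \<phi>'' :: "real \<Rightarrow> 'a"
  assumes iso: "bij (blinfun_apply \<Omega>)"
    and tau: "\<tau> > 0"
    and phi: "C2_with (-2*\<tau>) 0 \<phi> \<phi>' \<phi>''"
  shows "classical_solution \<Omega> \<tau> (\<lambda>t. 0) \<phi>
           (\<lambda>t. x1 \<tau> \<Omega> (t + \<tau>) (\<phi> (-2*\<tau>)) + x2 \<tau> \<Omega> (t + 2*\<tau>) (\<phi>' (-2*\<tau>))
                + integral {-2*\<tau>..0} (\<lambda>s. x2 \<tau> \<Omega> (t - s) (\<phi>'' s)))
    \<and> (\<forall>y. classical_solution \<Omega> \<tau> (\<lambda>t. 0) \<phi> y \<longrightarrow>
          (\<forall>t\<ge>-2*\<tau>. y t = x1 \<tau> \<Omega> (t + \<tau>) (\<phi> (-2*\<tau>)) + x2 \<tau> \<Omega> (t + 2*\<tau>) (\<phi>' (-2*\<tau>))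
                + integral {-2*\<tau>..0} (\<lambda>s. x2 \<tau> \<Omega> (t - s) (\<phi>'' s))))"
proof
  have eq: "(\<lambda>t. x1 \<tau> \<Omega> (t + \<tau>) (\<phi> (-2*\<tau>)) + x2 \<tau> \<Omega> (t + 2*\<tau>) (\<phi>' (-2*\<tau>))
                + integral {-2*\<tau>..0} (\<lambda>s. x2 \<tau> \<Omega> (t - s) (\<phi>'' s))) = XX \<Omega> \<tau> \<phi> \<phi>' \<phi>''"
    by (simp add: fun_eq_iff XX_def)
  show "classical_solution \<Omega> \<tau> (\<lambda>t. 0) \<phi>
           (\<lambda>t. x1 \<tau> \<Omega> (t + \<tau>) (\<phi> (-2*\<tau>)) + x2 \<tau> \<Omega> (t + 2*\<tau>) (\<phi>' (-2*\<tau>))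
                + integral {-2*\<tau>..0} (\<lambda>s. x2 \<tau> \<Omega> (t - s) (\<phi>'' s)))"
    unfolding eq by (rule existence[OF iso tau phi])
  show "\<forall>y. classical_solution \<Omega> \<tau> (\<lambda>t. 0) \<phi> y \<longrightarrow>
          (\<forall>t\<ge>-2*\<tau>. y t = x1 \<tau> \<Omega> (t + \<tau>) (\<phi> (-2*\<tau>)) + x2 \<tau> \<Omega> (t + 2*\<tau>) (\<phi>' (-2*\<tau>))
                + integral {-2*\<tau>..0} (\<lambda>s. x2 \<tau> \<Omega> (t - s) (\<phi>'' s)))"
    using uniqueness[OF iso tau phi] by (simp add: XX_def)
qed

end
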